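(* Let $p$ be a prime, let $G$ be a finite abelian $p$-group, and let $\boldsymbol{\alpha}=(\alpha_1,\ldots,\alpha_r)$ be a basis for $G$. Let $j$ and $k$ be nonnegative integers with $j<k$. Then $\boldsymbol{\alpha}(j,k)$ is a basis for $G(j,k)$.
   Context: A vector $\boldsymbol{\gamma}=(\gamma_1,\ldots,\gamma_s)$ of elements of a finite abelian group (trivial entries allowed) is a basis for the group $\langle\boldsymbol{\gamma}\rangle$ it generates if every $\beta\in\langle\boldsymbol{\gamma}\rangle$ can be written uniquely as $\gamma_1^{x_1}\cdots\gamma_s^{x_s}$ with $0\le x_i<|\gamma_i|$. For nonnegative integers $j<k$, $G(j,k)=\{\beta^{p^j}:\beta\in G,\ \beta^{p^k}=1_G\}$. With $n_i=\log_p|\alpha_i|$ and $q_i=p^{\,j+\max(0,n_i-k)}$, set $\mathbf{q}(j,k)=(q_1,\ldots,q_r)$ and $\boldsymbol{\alpha}(j,k)=(\alpha_1^{q_1},\ldots,\alpha_r^{q_r})$. *)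

theory Defs
  imports "HOL-Algebra.Algebra"
begin

fun pow_prod :: "('a, 'b) monoid_scheme \<Rightarrow> 'a list \<Rightarrow> nat list \<Rightarrow> 'a" where
  "pow_prod G (g # gs) (x # xs) = (g [^]\<^bsub>G\<^esub> x) \<otimes>\<^bsub>G\<^esub> pow_prod G gs xs"
| "pow_prod G _ _ = \<one>\<^bsub>G\<^esub>"

definition is_basis :: "('a, 'b) monoid_scheme \<Rightarrow> 'a list \<Rightarrow> bool" where
  "is_basis G gs \<longleftrightarrow> set gs \<subseteq> carrier G \<and>
     (\<forall>\<beta> \<in> generate G (set gs). \<exists>!xs. length xs = length gs \<and>
        (\<forall>i < length gs. xs ! i < group.ord G (gs ! i)) \<and> \<beta> = pow_prod G gs xs)"

definition Gjk :: "('a, 'b) monoid_scheme \<Rightarrow> nat \<Rightarrow> nat \<Rightarrow> nat \<Rightarrow> 'a set" where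
  "Gjk G p j k = {\<beta> [^]\<^bsub>G\<^esub> (p ^ j) | \<beta>. \<beta> \<in> carrier G \<and> \<beta> [^]\<^bsub>G\<^esub> (p ^ k) = \<one>\<^bsub>G\<^esub>}"

definition logp_ord :: "('a, 'b) monoid_scheme \<Rightarrow> nat \<Rightarrow> 'a \<Rightarrow> nat" where
  "logp_ord G p a = (THE n. group.ord G a = p ^ n)"

text \<open>q_i = p^(j + max(0, n_i - k)) (nat subtraction truncates at 0).\<close>
definition q_exp :: "('a, 'b) monoid_scheme \<Rightarrow> nat \<Rightarrow> nat \<Rightarrow> nat \<Rightarrow> 'a \<Rightarrow> nat" where
  "q_exp G p j k a = p ^ (j + (logp_ord G p a - k))"

definition alpha_jk :: "('a, 'b) monoid_scheme \<Rightarrow> nat \<Rightarrow> nat \<Rightarrow> nat \<Rightarrow> 'a list \<Rightarrow> 'a list" where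
  "alpha_jk G p j k as = map (\<lambda>a. a [^]\<^bsub>G\<^esub> q_exp G p j k a) as"

end

theory Submission
  imports Defs
begin

context comm_group
begin

lemma pp_closed: "set gs \<subseteq> carrier G \<Longrightarrow> pow_prod G gs xs \<in> carrier G"
proof (induction gs arbitrary: xs)
  case (Cons g gs)
  then show ?case by (cases xs) auto
qed auto

lemma pp_zero: "pow_prod G gs (replicate m 0) = \<one>"
proof (induction gs arbitrary: m)
  case (Cons g gs)
  then show ?case by (cases m) auto
qed auto

lemma pp_unit: "set gs \<subseteq> carrier G \<Longrightarrow> i < length gs \<Longrightarrow>
   pow_prod G gs (replicate i 0 @ 1 # replicate m 0) = gs ! i"
proof (induction gs arbitrary: i)
  case (Cons g gs)
  show ?case
  proof (cases i)
    case 0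
    then show ?thesis using Cons.prems by (simp add: pp_zero)
  next
    case (Suc i')
    then have "gs ! i' \<in> carrier G" using Cons.prems nth_mem by fastforce
    then show ?thesis using Suc Cons by simp
  qed
qed auto

lemma pp_cong:
  assumes "set gs \<subseteq> carrier G" "set hs \<subseteq> carrier G" "length xs = length gs"
    "length hs = length gs" "length ys = length gs"
    "\<And>i. i < length gs \<Longrightarrow> gs!i [^] (xs!i) = hs!i [^] (ys!i)"
  shows "pow_prod G gs xs = pow_prod G hs ys"
  using assms
proof (induction gs arbitrary: xs hs ys)
  case Nil
  then show ?case by simp
next
  case (Cons g gs)
  obtain x xs' where xs: "xs = x # xs'" using Cons.prems(3) by (cases xs) auto
  obtain h hs' where hs: "hs = h # hs'" using Cons.prems(4) by (cases hs) auto
  obtain y ys' where ys: "ys = y # ys'" using Cons.prems(5) by (cases ys) auto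
  have "g [^] x = h [^] y" using Cons.prems(6)[of 0] xs hs ys by simp
  moreover have "pow_prod G gs xs' = pow_prod G hs' ys'"
  proof (rule Cons.IH)
    fix i assume "i < length gs"
    then show "gs ! i [^] xs' ! i = hs' ! i [^] ys' ! i"
      using Cons.prems(6)[of "Suc i"] xs hs ys by simp
  qed (use Cons.prems xs hs ys in auto)
  ultimately show ?case using xs hs ys by simp
qed

lemma pp_pow:
  "set gs \<subseteq> carrier G \<Longrightarrow> pow_prod G gs xs [^] (m::nat) = pow_prod G gs (map (\<lambda>x. x * m) xs)"
proof (induction gs arbitrary: xs)
  case (Cons g gs)
  show ?case
  proof (cases xs)
    case (Cons x xs')
    then show ?thesis using Cons.IH[of xs'] Cons.prems pp_closed[of gs xs']
      by (simp add: nat_pow_distrib nat_pow_pow)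
  qed simp
qed simp

lemma pp_mult:
  "set gs \<subseteq> carrier G \<Longrightarrow> length xs = length gs \<Longrightarrow> length ys = length gs \<Longrightarrow>
   pow_prod G gs xs \<otimes> pow_prod G gs ys = pow_prod G gs (map2 (+) xs ys)"
proof (induction gs arbitrary: xs ys)
  case Nil
  then show ?case by simp
next
  case (Cons g gs)
  obtain x xs' where xs: "xs = x # xs'" using Cons.prems(2) by (cases xs) auto
  obtain y ys' where ys: "ys = y # ys'" using Cons.prems(3) by (cases ys) auto
  have IH: "pow_prod G gs xs' \<otimes> pow_prod G gs ys' = pow_prod G gs (map2 (+) xs' ys')"
    using Cons xs ys by auto
  have c: "g \<in> carrier G" "set gs \<subseteq> carrier G" using Cons.prems by auto
  have "g [^] x \<otimes> pow_prod G gs xs' \<otimes> (g [^] y \<otimes> pow_prod G gs ys')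
      = (g [^] x \<otimes> g [^] y) \<otimes> (pow_prod G gs xs' \<otimes> pow_prod G gs ys')"
    using c pp_closed[OF c(2)] by (simp add: m_ac)
  then show ?case using IH xs ys c by (simp add: nat_pow_mult)
qed

lemma pp_in_gen:
  "set gs \<subseteq> carrier G \<Longrightarrow> pow_prod G gs xs \<in> generate G (set gs)"
proof (induction gs arbitrary: xs)
  case (Cons g gs)
  show ?case
  proof (cases xs)
    case (Cons x xs')
  have sg: "subgroup (generate G (set (g # gs))) G"
    using Cons.prems by (intro generate_is_subgroup) auto
  have "g [^] x \<in> generate G (set (g # gs))"
    using subgroup_int_pow_closed[OF sg, of g "int x"] generate.incl[of g "set (g#gs)" G]
    by (simp add: int_pow_int)
  moreover have "pow_prod G gs xs' \<in> generate G (set (g # gs))"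
    using Cons.IH[of xs'] Cons.prems mono_generate[of "set gs" "set (g#gs)"] by auto
  ultimately show ?thesis using Cons subgroup.m_closed[OF sg] by simp
  qed (auto intro: generate.one)
qed (auto intro: generate.one)

lemma inv_order:
  assumes "finite (carrier G)" "a \<in> carrier G"
  shows "inv a = a [^] (order G - 1)"
proof (rule inv_equality)
  have "order G \<ge> 1" using assms by (metis One_nat_def Suc_leI order_gt_0_iff_finite)
  then have e: "Suc (order G - 1) = order G" by simp
  have "a [^] (order G - 1) \<otimes> a = a [^] Suc (order G - 1)"
    by (simp only: nat_pow_Suc)
  then have "a [^] (order G - 1) \<otimes> a = a [^] order G" by (simp only: e)
  then show "a [^] (order G - 1) \<otimes> a = \<one>" using pow_order_eq_1 assms by simp
qed (use assms in auto)

lemma gen_sub: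
  assumes "finite (carrier G)" "set gs \<subseteq> carrier G"
  shows "generate G (set gs) \<subseteq> {pow_prod G gs xs | xs. length xs = length gs}"
proof (rule generate_subgroup_incl)
  let ?S = "{pow_prod G gs xs | xs. length xs = length gs}"
  show "subgroup ?S G"
  proof (rule subgroupI)
    show "?S \<subseteq> carrier G" using pp_closed assms by auto
    have "pow_prod G gs (replicate (length gs) 0) \<in> ?S" by auto
    then show "?S \<noteq> {}" by blast
  next
    fix a assume "a \<in> ?S"
    then obtain xs where a: "a = pow_prod G gs xs" "length xs = length gs" by auto
    have "inv a = pow_prod G gs (map (\<lambda>x. x * (order G - 1)) xs)"
      using a inv_order[OF assms(1)] pp_closed[OF assms(2)] pp_pow[OF assms(2)] by simp
    then show "inv a \<in> ?S" using a by auto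
  next
    fix a b assume "a \<in> ?S" "b \<in> ?S"
    then obtain xs ys where "a = pow_prod G gs xs" "length xs = length gs"
      "b = pow_prod G gs ys" "length ys = length gs" by auto
    then have "a \<otimes> b = pow_prod G gs (map2 (+) xs ys)" "length (map2 (+) xs ys) = length gs"
      using pp_mult[OF assms(2)] by auto
    then show "a \<otimes> b \<in> ?S" by blast
  qed
next
  show "set gs \<subseteq> {pow_prod G gs xs | xs. length xs = length gs}"
  proof
    fix g assume g: "g \<in> set gs"
    then obtain i where i: "i < length gs" "gs ! i = g" by (metis in_set_conv_nth)
    let ?xs = "replicate i 0 @ 1 # replicate (length gs - Suc i) 0"
    have "pow_prod G gs ?xs = g"
      using pp_unit assms i by auto
    moreover have "length ?xs = length gs" using i by simp
    ultimately show "g \<in> {pow_prod G gs xs | xs. length xs = length gs}"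
      by blast
  qed
qed

lemma pow_mod_ord:
  assumes "a \<in> carrier G" shows "a [^] (x mod ord a) = a [^] (x::nat)"
proof -
  have 1: "a [^] (ord a * (x div ord a)) = \<one>"
    using assms by (simp add: nat_pow_pow[symmetric])
  have 2: "a [^] (ord a * (x div ord a)) \<otimes> a [^] (x mod ord a) = a [^] x"
    using assms nat_pow_mult[of a "ord a * (x div ord a)" "x mod ord a"] by simp
  then show ?thesis using 1 assms by simp
qed

lemma reduce:
  assumes "finite (carrier G)" "set gs \<subseteq> carrier G" "b \<in> generate G (set gs)"
  shows "\<exists>xs. length xs = length gs \<and> (\<forall>i < length gs. xs ! i < ord (gs ! i)) \<and> b = pow_prod G gs xs"
proof -
  obtain xs where xs: "b = pow_prod G gs xs" "length xs = length gs" using subsetD[OF gen_sub[OF assms(1,2)] assms(3)] by blast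
  let ?ys = "map (\<lambda>i. xs ! i mod ord (gs ! i)) [0..<length gs]"
  have "pow_prod G gs xs = pow_prod G gs ?ys"
  proof (rule pp_cong)
    fix i assume "i < length gs"
    then have "gs ! i \<in> carrier G" using assms(2) nth_mem by blast
    then show "gs ! i [^] xs ! i = gs ! i [^] ?ys ! i" using \<open>i < length gs\<close> by (simp add: pow_mod_ord)
  qed (use assms xs in auto)
  moreover have "\<forall>i < length gs. 0 < ord (gs ! i)"
  proof (intro allI impI)
    fix i assume "i < length gs"
    then have "gs ! i \<in> carrier G" using assms(2) nth_mem by blast
    then show "0 < ord (gs ! i)" using ord_ge_1[OF assms(1)] by fastforce
  qed
  then have "\<forall>i < length gs. ?ys ! i < ord (gs ! i)" by auto
  ultimately show ?thesis using xs by (intro exI[of _ ?ys]) auto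
qed

lemma basisI:
  assumes "finite (carrier G)" "set gs \<subseteq> carrier G"
    "\<And>xs ys. length xs = length gs \<Longrightarrow> length ys = length gs \<Longrightarrow>
       (\<forall>i<length gs. xs!i < ord (gs!i)) \<Longrightarrow> (\<forall>i<length gs. ys!i < ord (gs!i)) \<Longrightarrow>
       pow_prod G gs xs = pow_prod G gs ys \<Longrightarrow> xs = ys"
  shows "is_basis G gs"
  unfolding is_basis_def
proof (intro conjI ballI assms(2))
  fix b assume "b \<in> generate G (set gs)"
  then obtain xs where xs: "length xs = length gs \<and> (\<forall>i < length gs. xs ! i < ord (gs ! i)) \<and> b = pow_prod G gs xs"
    using reduce[OF assms(1,2)] by blast
  show "\<exists>!xs. length xs = length gs \<and> (\<forall>i<length gs. xs ! i < ord (gs ! i)) \<and> b = pow_prod G gs xs"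
  proof (rule ex1I[of _ xs])
    fix ys assume "length ys = length gs \<and> (\<forall>i<length gs. ys ! i < ord (gs ! i)) \<and> b = pow_prod G gs ys"
    then show "ys = xs" using xs assms(3)[of ys xs] by simp
  qed (use xs in simp)
qed

lemma basisD:
  assumes "is_basis G gs" "length xs = length gs" "length ys = length gs"
    "\<forall>i<length gs. xs!i < ord (gs!i)" "\<forall>i<length gs. ys!i < ord (gs!i)"
    "pow_prod G gs xs = pow_prod G gs ys"
  shows "xs = ys"
proof -
  have c: "set gs \<subseteq> carrier G" using assms(1) unfolding is_basis_def by (rule conjunct1)
  have all: "\<forall>b \<in> generate G (set gs). \<exists>!zs. length zs = length gs \<and> (\<forall>i<length gs. zs ! i < ord (gs ! i)) \<and> b = pow_prod G gs zs"
    using assms(1) unfolding is_basis_def by (rule conjunct2)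
  have "pow_prod G gs xs \<in> generate G (set gs)" using pp_in_gen[OF c] .
  with all have ex: "\<exists>!zs. length zs = length gs \<and> (\<forall>i<length gs. zs ! i < ord (gs ! i)) \<and> pow_prod G gs xs = pow_prod G gs zs"
    by (rule bspec)
  then obtain z where "length z = length gs \<and> (\<forall>i<length gs. z ! i < ord (gs ! i)) \<and> pow_prod G gs xs = pow_prod G gs z"
    and uz: "\<forall>y. length y = length gs \<and> (\<forall>i<length gs. y ! i < ord (gs ! i)) \<and> pow_prod G gs xs = pow_prod G gs y \<longrightarrow> y = z"
    by (rule ex1E)
  have "xs = z" using uz assms(2,4) by simp
  moreover have "ys = z" using uz assms(3,5,6) by simp
  ultimately show ?thesis by simp
qed



lemma dvd_pk:
  fixes p n k x :: nat
  assumes "p > 0" "p ^ n dvd x * p ^ k"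
  shows "p ^ (n - k) dvd x"
proof (cases "n \<le> k")
  case True then show ?thesis by simp
next
  case False
  then have "p ^ n = p ^ (n - k) * p ^ k" by (simp add: power_add[symmetric])
  then show ?thesis using assms by simp
qed

lemma main:
  fixes p j k :: nat and \<alpha> :: "'a list"
  assumes "Factorial_Ring.prime p"
    and "True" and "finite (carrier G)"
    and "\<exists>m. order G = p ^ m"
    and "is_basis G \<alpha>" and "generate G (set \<alpha>) = carrier G"
    and "j < k"
  shows "is_basis G (alpha_jk G p j k \<alpha>) \<and> generate G (set (alpha_jk G p j k \<alpha>)) = Gjk G p j k"
proof -
  have fin: "finite (carrier G)" by (rule assms(3))
  have p1: "p > 1" using assms(1) prime_gt_1_nat by blast
  then have p0: "p > 0" by simp
  obtain m where m: "order G = p ^ m" using assms(4) by blast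
  have ac: "set \<alpha> \<subseteq> carrier G" using assms(5) unfolding is_basis_def by (rule conjunct1)
  define n where "n = (\<lambda>a. logp_ord G p a)"
  define q where "q = (\<lambda>a. q_exp G p j k a)"
  have q_eq: "\<And>a. q a = p ^ j * p ^ (n a - k)"
    unfolding q_def q_exp_def n_def by (simp add: power_add)
  have q0: "\<And>a. q a > 0" using q_eq p0 by simp
  have ordn: "ord a = p ^ n a" if a: "a \<in> carrier G" for a
  proof -
    have "ord a dvd p ^ m" using ord_dvd_group_order[OF a] m by simp
    then obtain i where i: "ord a = p ^ i" using divides_primepow_nat[OF assms(1)] by blast
    have "n a = i" unfolding n_def logp_ord_def
    proof (rule the_equality)
      show "ord a = p ^ i" by (rule i)
    next
      fix t assume "ord a = p ^ t" then show "t = i" using i p1 by simp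
    qed
    then show ?thesis using i by simp
  qed
  have key1: "x * q a < ord a" if a: "a \<in> carrier G" and x: "x < ord (a [^] q a)" for a x
  proof (cases "j + (n a - k) \<le> n a")
    case True
    have qd: "q a dvd ord a" using True ordn[OF a] q_eq
      by (simp add: le_imp_power_dvd power_add[symmetric])
    then have "ord (a [^] q a) = ord a div q a" using ord_pow[OF a qd] q0 by simp
    then have "x * q a < (ord a div q a) * q a" using x q0 by simp
    also have "\<dots> = ord a" using qd by simp
    finally show ?thesis .
  next
    case False
    then have "ord a dvd q a" using ordn[OF a] q_eq
      by (simp add: le_imp_power_dvd power_add[symmetric])
    then have "a [^] q a = \<one>" using pow_eq_id[OF a] by simp
    then have "x = 0" using x by simp
    then show ?thesis using ord_ge_1[OF fin a] by simp
  qed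
  define \<beta> where "\<beta> = alpha_jk G p j k \<alpha>"
  have bdef: "\<beta> = map (\<lambda>a. a [^] q a) \<alpha>" unfolding \<beta>_def alpha_jk_def q_def by simp
  have bc: "set \<beta> \<subseteq> carrier G" using ac unfolding bdef by auto
  have blen: "length \<beta> = length \<alpha>" unfolding bdef by simp
  have bnth: "\<And>i. i < length \<alpha> \<Longrightarrow> \<beta> ! i = \<alpha> ! i [^] q (\<alpha> ! i)" unfolding bdef by simp
  have anth: "\<And>i. i < length \<alpha> \<Longrightarrow> \<alpha> ! i \<in> carrier G" using ac nth_mem by blast
  have bpow: "\<And>i y. i < length \<alpha> \<Longrightarrow> \<beta> ! i [^] y = \<alpha> ! i [^] (y * q (\<alpha> ! i))"
    using bnth anth by (simp add: nat_pow_pow mult.commute)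
  have basis: "is_basis G \<beta>"
  proof (rule basisI[OF fin bc])
    fix xs ys assume xl: "length xs = length \<beta>" and yl: "length ys = length \<beta>"
      and xr: "\<forall>i<length \<beta>. xs ! i < ord (\<beta> ! i)" and yr: "\<forall>i<length \<beta>. ys ! i < ord (\<beta> ! i)"
      and eq: "pow_prod G \<beta> xs = pow_prod G \<beta> ys"
    define xs' where "xs' = map (\<lambda>i. xs ! i * q (\<alpha> ! i)) [0..<length \<alpha>]"
    define ys' where "ys' = map (\<lambda>i. ys ! i * q (\<alpha> ! i)) [0..<length \<alpha>]"
    have e1: "pow_prod G \<beta> xs = pow_prod G \<alpha> xs'"
      by (rule pp_cong) (use bc ac xl blen bpow in \<open>auto simp: xs'_def\<close>)
    have e2: "pow_prod G \<beta> ys = pow_prod G \<alpha> ys'"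
      by (rule pp_cong) (use bc ac yl blen bpow in \<open>auto simp: ys'_def\<close>)
    have "xs' = ys'"
    proof (rule basisD[OF assms(5)])
      show "\<forall>i<length \<alpha>. xs' ! i < ord (\<alpha> ! i)"
        using xr key1 anth bnth blen by (auto simp: xs'_def)
      show "\<forall>i<length \<alpha>. ys' ! i < ord (\<alpha> ! i)"
        using yr key1 anth bnth blen by (auto simp: ys'_def)
      show "pow_prod G \<alpha> xs' = pow_prod G \<alpha> ys'" using e1 e2 eq by simp
    qed (auto simp: xs'_def ys'_def)
    then have "\<forall>i<length \<alpha>. xs ! i * q (\<alpha> ! i) = ys ! i * q (\<alpha> ! i)"
      unfolding xs'_def ys'_def by (metis (no_types, lifting) add_0 diff_zero nth_map_upt)
    moreover have "\<And>a. q a \<noteq> 0" using q0 by (metis not_gr_zero)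
    ultimately have "\<forall>i<length \<alpha>. xs ! i = ys ! i" by simp
    then show "xs = ys" using xl yl blen by (simp add: nth_equalityI)
  qed
  have sub1: "generate G (set \<beta>) \<subseteq> Gjk G p j k"
  proof
    fix x assume "x \<in> generate G (set \<beta>)"
    then obtain ys where x: "x = pow_prod G \<beta> ys" and yl: "length ys = length \<beta>"
      using subsetD[OF gen_sub[OF fin bc]] by blast
    define zs where "zs = map (\<lambda>i. ys ! i * p ^ (n (\<alpha> ! i) - k)) [0..<length \<alpha>]"
    define \<gamma> where "\<gamma> = pow_prod G \<alpha> zs"
    have gc: "\<gamma> \<in> carrier G" unfolding \<gamma>_def using pp_closed[OF ac] .
    have "\<gamma> [^] (p ^ k) = pow_prod G \<alpha> (map (\<lambda>x. x * p ^ k) zs)"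
      unfolding \<gamma>_def by (rule pp_pow[OF ac])
    also have "\<dots> = pow_prod G \<alpha> (replicate (length \<alpha>) 0)"
    proof (rule pp_cong)
      fix i assume i: "i < length \<alpha>"
      have "p ^ n (\<alpha> ! i) dvd p ^ (n (\<alpha> ! i) - k) * p ^ k"
        by (simp add: le_imp_power_dvd power_add[symmetric])
      then have "ord (\<alpha> ! i) dvd map (\<lambda>x. x * p ^ k) zs ! i"
        using i ordn[OF anth[OF i]] by (simp add: zs_def mult.assoc)
      then have "\<alpha> ! i [^] map (\<lambda>x. x * p ^ k) zs ! i = \<one>"
        using pow_eq_id[OF anth[OF i]] by blast
      then show "\<alpha> ! i [^] map (\<lambda>x. x * p ^ k) zs ! i = \<alpha> ! i [^] replicate (length \<alpha>) (0::nat) ! i"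
        using i by simp
    qed (use ac in \<open>auto simp: zs_def\<close>)
    also have "\<dots> = \<one>" by (rule pp_zero)
    finally have g1: "\<gamma> [^] (p ^ k) = \<one>" .
    have "\<gamma> [^] (p ^ j) = pow_prod G \<alpha> (map (\<lambda>x. x * p ^ j) zs)"
      unfolding \<gamma>_def by (rule pp_pow[OF ac])
    also have "\<dots> = pow_prod G \<beta> ys"
    proof (rule pp_cong)
      fix i assume i: "i < length \<alpha>"
      show "\<alpha> ! i [^] map (\<lambda>x. x * p ^ j) zs ! i = \<beta> ! i [^] ys ! i"
        using i bpow[OF i] q_eq by (simp add: zs_def mult_ac)
    qed (use ac bc yl blen in \<open>auto simp: zs_def\<close>)
    finally have "x = \<gamma> [^] (p ^ j)" using x by simp
    then show "x \<in> Gjk G p j k" unfolding Gjk_def using gc g1 by blast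
  qed
  have sub2: "Gjk G p j k \<subseteq> generate G (set \<beta>)"
  proof
    fix x assume "x \<in> Gjk G p j k"
    then obtain \<gamma> where x: "x = \<gamma> [^] (p ^ j)" and gc: "\<gamma> \<in> carrier G" and g1: "\<gamma> [^] (p ^ k) = \<one>"
      unfolding Gjk_def by blast
    have "\<gamma> \<in> generate G (set \<alpha>)" using gc assms(6) by simp
    then obtain xs where xl: "length xs = length \<alpha>" and xr: "\<forall>i<length \<alpha>. xs ! i < ord (\<alpha> ! i)"
      and gx: "\<gamma> = pow_prod G \<alpha> xs"
      using reduce[OF fin ac] by blast
    define zs where "zs = map (\<lambda>i. (xs ! i * p ^ k) mod ord (\<alpha> ! i)) [0..<length \<alpha>]"
    have opos: "\<forall>i<length \<alpha>. 0 < ord (\<alpha> ! i)"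
    proof (intro allI impI)
      fix i assume "i < length \<alpha>"
      then show "0 < ord (\<alpha> ! i)" using ord_ge_1[OF fin anth] by fastforce
    qed
    have "pow_prod G \<alpha> zs = pow_prod G \<alpha> (map (\<lambda>x. x * p ^ k) xs)"
    proof (rule pp_cong)
      fix i assume i: "i < length \<alpha>"
      show "\<alpha> ! i [^] zs ! i = \<alpha> ! i [^] map (\<lambda>x. x * p ^ k) xs ! i"
        using i xl pow_mod_ord[OF anth[OF i]] by (simp add: zs_def)
    qed (use ac xl in \<open>auto simp: zs_def\<close>)
    also have "\<dots> = \<gamma> [^] (p ^ k)" unfolding gx by (rule pp_pow[OF ac, symmetric])
    also have "\<dots> = pow_prod G \<alpha> (replicate (length \<alpha>) 0)" using g1 pp_zero by simp
    finally have eqz: "pow_prod G \<alpha> zs = pow_prod G \<alpha> (replicate (length \<alpha>) 0)" .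
    have zr: "zs = replicate (length \<alpha>) 0"
    proof (rule basisD[OF assms(5)])
      show "pow_prod G \<alpha> zs = pow_prod G \<alpha> (replicate (length \<alpha>) 0)" by (rule eqz)
      show "\<forall>i<length \<alpha>. zs ! i < ord (\<alpha> ! i)"
        using opos by (simp add: zs_def)
      show "\<forall>i<length \<alpha>. replicate (length \<alpha>) 0 ! i < ord (\<alpha> ! i)"
        using opos by simp
    qed (simp_all add: zs_def)
    have dv: "p ^ (n (\<alpha> ! i) - k) dvd xs ! i" if i: "i < length \<alpha>" for i
    proof -
      have "zs ! i = 0" using zr i by simp
      then have "(xs ! i * p ^ k) mod ord (\<alpha> ! i) = 0" using i by (simp add: zs_def)
      then have "ord (\<alpha> ! i) dvd xs ! i * p ^ k" by (simp add: mod_eq_0_iff_dvd)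
      then have "p ^ n (\<alpha> ! i) dvd xs ! i * p ^ k" using ordn[OF anth[OF i]] by simp
      then show ?thesis by (rule dvd_pk[OF p0])
    qed
    define ys where "ys = map (\<lambda>i. xs ! i div p ^ (n (\<alpha> ! i) - k)) [0..<length \<alpha>]"
    have "x = pow_prod G \<alpha> (map (\<lambda>x. x * p ^ j) xs)" unfolding x gx by (rule pp_pow[OF ac])
    also have "\<dots> = pow_prod G \<beta> ys"
    proof (rule pp_cong)
      fix i assume i: "i < length \<alpha>"
      have "ys ! i * q (\<alpha> ! i) = xs ! i * p ^ j"
        using i dv[OF i] q_eq by (simp add: ys_def mult_ac)
      then show "\<alpha> ! i [^] map (\<lambda>x. x * p ^ j) xs ! i = \<beta> ! i [^] ys ! i"
        using i xl bpow[OF i] by simp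
    qed (use ac bc xl blen in \<open>auto simp: ys_def\<close>)
    finally show "x \<in> generate G (set \<beta>)" using pp_in_gen[OF bc] by simp
  qed
  show ?thesis using basis sub1 sub2 unfolding \<beta>_def by blast
qed

end

theorem lemma1:
  fixes G :: "('a, 'b) monoid_scheme" and p j k :: nat and \<alpha> :: "'a list"
  assumes "Factorial_Ring.prime p"
    and "comm_group G" and "finite (carrier G)"
    and "\<exists>m. order G = p ^ m"
    and "is_basis G \<alpha>" and "generate G (set \<alpha>) = carrier G"
    and "j < k"
  shows "is_basis G (alpha_jk G p j k \<alpha>) \<and> generate G (set (alpha_jk G p j k \<alpha>)) = Gjk G p j k"
  using comm_group.main[OF assms(2) assms(1) TrueI assms(3-7)] .

end
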